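(* Let $d\ge2$ be an integer and $a\in\mathbb C$ such that $((d+1)a)^k=1$, where $k$ is the smallest such positive integer. Let $p(t)=a\Bigl((d-1)-\sum_{i=1}^d2t^i\Bigr)$ and put $N=\operatorname{lcm}(k,d+1)$ if $d$ is odd and $N=\operatorname{lcm}(k,2(d+1))$ if $d$ is even. Then the column partial sums of $p$ satisfy $S_{[m+N]}=S_{[m]}$ for all $m\ge1$; in particular $(S_{[m]})_{m\ge1}$ is periodic.
   Context: For a polynomial $p(t)$ of degree $d\ge1$ with $p(0)\neq0$, the column partial sums are $S_{[m]}:=[t^{(m-1)(d+1)}]\dfrac{(tp(t))^m}{(1-t)(1-t^{d+1})}$ for $m\ge1$ (equivalently, the sum of the coefficients of $t^0,\dots,t^{(m-1)(d+1)}$ in $(tp(t))^m/(1-t^{d+1})$). *)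

theory Defs
  imports "HOL-Computational_Algebra.Computational_Algebra"
begin

definition col_partial_sum :: "complex poly \<Rightarrow> nat \<Rightarrow> complex" where
  "col_partial_sum p m =
     fps_nth ((fps_X * fps_of_poly p) ^ m
              * inverse ((1 - fps_X) * (1 - fps_X ^ (degree p + 1))))
             ((m - 1) * (degree p + 1))"

end

theory Submission imports Defs "HOL-Number_Theory.Cong" begin

definition wsum :: "(nat \<Rightarrow> complex) \<Rightarrow> complex poly \<Rightarrow> complex" where
  "wsum w P = (\<Sum>i\<le>degree P. coeff P i * w i)"

lemma wsum_ext: "degree P \<le> D \<Longrightarrow> wsum w P = (\<Sum>i\<le>D. coeff P i * w i)"
  unfolding wsum_def
  by (rule sum.mono_neutral_left) (auto simp: coeff_eq_0)

lemma wsum_diff: "wsum w (P - Q) = wsum w P - wsum w Q"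
proof -
  let ?D = "max (degree P) (degree Q)"
  have "degree (P - Q) \<le> ?D" by (simp add: degree_diff_le_max)
  then show ?thesis
    by (simp add: wsum_ext[of _ ?D] sum_subtractf algebra_simps)
qed

lemma wsum_shift:
  assumes per: "\<And>i. w (i + n) = w i"
  shows "wsum w ([:0,1:]^n * H) = wsum w H"
proof -
  let ?D = "degree H + n"
  have dg: "degree ([:0,1:]^n * H) \<le> ?D"
    by (metis (no_types) add.commute degree_mult_le degree_linear_power le_refl order_trans add_le_mono)
  have "wsum w ([:0,1:]^n * H) = (\<Sum>i\<le>?D. coeff ([:0,1:]^n * H) i * w i)"
    using dg by (rule wsum_ext)
  also have "\<dots> = (\<Sum>i\<le>?D. (if i < n then 0 else coeff H (i - n) * w i))"
    by (rule sum.cong) (simp_all add: monom_altdef[of 1 n, simplified, symmetric] coeff_monom_mult)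
  also have "\<dots> = (\<Sum>i\<in>{n..?D}. coeff H (i - n) * w i)"
    by (rule sum.mono_neutral_cong_right) (auto simp: not_less)
  also have "\<dots> = (\<Sum>i\<in>{0+n..degree H+n}. coeff H (i - n) * w i)" by simp
  also have "\<dots> = (\<Sum>j\<in>{0..degree H}. coeff H j * w (j + n))"
    by (subst sum.shift_bounds_cl_nat_ivl) simp
  also have "\<dots> = wsum w H" by (simp add: wsum_def per atLeast0AtMost)
  finally show ?thesis .
qed

lemma wsum_dvd_zero:
  assumes per: "\<And>i. w (i + n) = w i" and dv: "([:0,1:]^n - 1) dvd P"
  shows "wsum w P = 0"
proof -
  obtain H where "P = ([:0,1:]^n - 1) * H" using dv by blast
  then have "P = [:0,1:]^n * H - H" by (simp add: algebra_simps)
  then show ?thesis using wsum_shift[of w n, OF per] by (simp add: wsum_diff)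
qed

lemma wsum_cong:
  assumes per: "\<And>i. w (i + n) = w i" and c: "[A = B] (mod ([:0,1:]^n - 1))"
  shows "wsum w A = wsum w B"
  using wsum_dvd_zero[of w n, OF per, of "A - B"] c by (simp add: cong_iff_dvd_diff wsum_diff)

lemma poly1_sum: "degree (P::complex poly) \<le> D \<Longrightarrow> poly P 1 = (\<Sum>i\<le>D. coeff P i)"
  using wsum_ext[of P D "\<lambda>_. 1"] by (simp add: wsum_def poly_altdef)

lemma pderiv1_sum:
  fixes P :: "complex poly"
  assumes "degree P \<le> D"
  shows "poly (pderiv P) 1 = (\<Sum>i\<le>D. of_nat i * coeff P i)"
proof (cases D)
  case 0
  then have "degree P = 0" using assms by simp
  then obtain c where "P = [:c:]" by (metis degree_eq_zeroE)
  then show ?thesis using 0 by simp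
next
  case (Suc D')
  have "degree (pderiv P) \<le> D'" using assms Suc
    by (metis degree_pderiv diff_le_mono diff_Suc_1)
  then have "poly (pderiv P) 1 = (\<Sum>i\<le>D'. coeff (pderiv P) i)" by (rule poly1_sum)
  also have "\<dots> = (\<Sum>i\<le>D'. of_nat (Suc i) * coeff P (Suc i))" by (simp add: coeff_pderiv)
  also have "\<dots> = (\<Sum>i\<le>D. of_nat i * coeff P i)"
    unfolding Suc sum.atMost_Suc_shift by simp
  finally show ?thesis .
qed

lemma div_step: "0 < (n::nat) \<Longrightarrow> 0 < j \<Longrightarrow> j div n = (j - 1) div n + (if n dvd j then 1 else 0)"
proof -
  assume "0 < n" "0 < j"
  then obtain i where "j = Suc i" by (cases j) auto
  then show ?thesis using \<open>0<n\<close> by (auto simp: div_Suc dvd_eq_mod_eq_0)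
qed

lemma inv_K:
  assumes n: "0 < n"
  shows "inverse ((1 - fps_X) * (1 - fps_X ^ n) :: complex fps) = Abs_fps (\<lambda>j. of_nat (j div n + 1))"
proof (rule fps_inverse_unique)
  let ?K = "Abs_fps (\<lambda>j. of_nat (j div n + 1)) :: complex fps"
  let ?D = "Abs_fps (\<lambda>j. if n dvd j then 1 else 0) :: complex fps"
  have 1: "(1 - fps_X) * ?K = ?D"
  proof (rule fps_ext)
    fix j
    show "((1 - fps_X) * ?K) $ j = ?D $ j"
    proof (cases "j = 0")
      case True then show ?thesis by (simp add: algebra_simps)
    next
      case False
      then show ?thesis using div_step[OF n, of j] by (simp add: algebra_simps)
    qed
  qed
  have 2: "(1 - fps_X ^ n) * ?D = 1"
  proof (rule fps_ext)
    fix j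
    show "((1 - fps_X ^ n) * ?D) $ j = (1::complex fps) $ j"
    proof (cases "j < n")
      case True then show ?thesis using n
        by (auto simp: algebra_simps fps_X_power_mult_nth dest: dvd_imp_le)
    next
      case False
      then have "n dvd j \<longleftrightarrow> n dvd (j - n)" by (simp add: dvd_minus_self)
      then show ?thesis using False n by (simp add: algebra_simps fps_X_power_mult_nth)
    qed
  qed
  show "(1 - fps_X) * (1 - fps_X ^ n) * ?K = 1"
  proof -
    have "(1 - fps_X) * (1 - fps_X ^ n) * ?K = (1 - fps_X ^ n) * ((1 - fps_X) * ?K)"
      by (simp only: mult.commute mult.left_commute)
    then show ?thesis by (simp only: 1 2)
  qed
qed

definition rho :: "nat \<Rightarrow> nat \<Rightarrow> nat" where "rho n i = (n - i mod n) mod n"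

lemma rho_per: "rho n (i + n) = rho n i" by (simp add: rho_def)

lemma W1:
  assumes n: "0 < n" and i: "i \<le> (m - 1) * n" and m: "1 \<le> m"
  shows "n * (((m - 1) * n - i) div n + 1) + i + rho n i = n * m"
proof -
  let ?M = "(m - 1) * n"
  have e1: "n * ((?M - i) div n) + (?M - i) mod n = ?M - i" by simp
  have "((?M - i) mod n + i mod n) mod n = 0"
  proof -
    have "((?M - i) mod n + i mod n) mod n = ((?M - i) + i) mod n" by (simp add: mod_add_eq)
    also have "\<dots> = 0" using i by simp
    finally show ?thesis .
  qed
  then have "(?M - i) mod n = rho n i"
  proof -
    assume h: "((?M - i) mod n + i mod n) mod n = 0"
    define x where "x = (?M - i) mod n"
    define s where "s = i mod n"
    have xn: "x < n" "s < n" using n by (simp_all add: x_def s_def)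
    have "n dvd (x + s)" using h by (simp add: x_def s_def mod_eq_0_iff_dvd)
    then obtain c where c: "x + s = n * c" by blast
    have "c < 2"
    proof (rule ccontr)
      assume "\<not> c < 2"
      then have "n * 2 \<le> n * c" by simp
      then show False using c xn by linarith
    qed
    then have "c = 0 \<or> c = 1" by linarith
    then have "x = (n - s) mod n"
    proof
      assume "c = 0" then have "x = 0" "s = 0" using c by simp_all
      then show ?thesis by simp
    next
      assume "c = 1" then have "x = n - s" using c by simp
      moreover have "s \<noteq> 0 \<or> x = n" using \<open>c = 1\<close> c by auto
      ultimately show ?thesis using xn by (cases "s = 0") auto
    qed
    then show ?thesis unfolding x_def s_def rho_def .
  qed
  then have "n * ((?M - i) div n) + rho n i = ?M - i" using e1 by simp
  then show ?thesis using i m by (cases m) (auto simp: algebra_simps)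
qed


lemma W2:
  assumes n: "0 < n" and i1: "(m - 1) * n < i" and i2: "i \<le> n * m" and m: "1 \<le> m"
  shows "i + rho n i = n * m"
proof -
  have mm: "(m - 1) * n + n = n * m" using m by (cases m) (auto simp: algebra_simps)
  define t where "t = i - (m - 1) * n"
  have t: "i = (m - 1) * n + t" "0 < t" "t \<le> n"
    using i1 i2 mm unfolding t_def by linarith+
  show ?thesis
  proof (cases "t = n")
    case True then show ?thesis using t mm by (simp add: rho_def)
  next
    case False
    then have "t < n" using t by simp
    then have "i mod n = t" using t by simp
    then have "rho n i = n - t" using \<open>t<n\<close> t by (simp add: rho_def)
    then show ?thesis using t mm by simp
  qed
qed

lemma main_formula:
  fixes q :: "complex poly"
  assumes n: "0 < n" and dq: "degree q \<le> n" and m: "1 \<le> m"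
  shows "of_nat n * fps_nth (fps_of_poly q ^ m * inverse ((1 - fps_X) * (1 - fps_X ^ n))) ((m - 1) * n)
     = of_nat (n * m) * poly q 1 ^ m - poly (pderiv (q ^ m)) 1 - wsum (\<lambda>i. of_nat (rho n i)) (q ^ m)"
proof -
  let ?M = "(m - 1) * n"
  let ?c = "coeff (q ^ m)"
  let ?w = "\<lambda>i. of_nat (n * m) - of_nat i - of_nat (rho n i) :: complex"
  have dqm: "degree (q ^ m) \<le> n * m"
    by (metis degree_power_le dq mult_le_mono1 order_trans)
  have "of_nat n * fps_nth (fps_of_poly q ^ m * inverse ((1 - fps_X) * (1 - fps_X ^ n))) ?M
      = of_nat n * (\<Sum>i=0..?M. ?c i * of_nat ((?M - i) div n + 1))"
    by (simp add: inv_K[OF n] fps_mult_nth fps_of_poly_power[symmetric] del: of_nat_add of_nat_Suc)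
  also have "\<dots> = (\<Sum>i=0..?M. ?c i * ?w i)"
    unfolding sum_distrib_left
  proof (rule sum.cong)
    fix i assume "i \<in> {0..?M}"
    then have iM: "i \<le> ?M" by simp
    define k where "k = (?M - i) div n + 1"
    from W1[OF n iM m] have "n * k + i + rho n i = n * m" unfolding k_def .
    then have "of_nat (n * k) + of_nat i + of_nat (rho n i) = (of_nat (n*m) :: complex)"
      using arg_cong[of _ _ "of_nat :: nat \<Rightarrow> complex"] by (simp only: of_nat_add[symmetric])
    then have "of_nat n * of_nat k = ?w i"
      by (simp add: algebra_simps del: of_nat_add of_nat_Suc)
    then have "of_nat n * (?c i * of_nat k) = ?c i * ?w i" by (metis mult.left_commute)
    then show "of_nat n * (?c i * of_nat ((?M - i) div n + 1)) = ?c i * ?w i" unfolding k_def .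
  qed simp
  also have "\<dots> = (\<Sum>i\<le>n*m. ?c i * ?w i)"
  proof (rule sum.mono_neutral_left)
    show "{0..?M} \<subseteq> {..n*m}" using m by (cases m) auto
    show "\<forall>i\<in>{..n * m} - {0..?M}. ?c i * ?w i = 0"
    proof
      fix i assume "i \<in> {..n * m} - {0..?M}"
      then have "?M < i" "i \<le> n * m" by auto
      from W2[OF n this m] have "of_nat i + of_nat (rho n i) = (of_nat (n*m) :: complex)"
        using arg_cong[of _ _ "of_nat :: nat \<Rightarrow> complex"] by (simp only: of_nat_add[symmetric])
      then show "?c i * ?w i = 0" by (simp add: algebra_simps)
    qed
  qed simp
  also have "\<dots> = of_nat (n * m) * (\<Sum>i\<le>n*m. ?c i) - (\<Sum>i\<le>n*m. of_nat i * ?c i)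
       - (\<Sum>i\<le>n*m. ?c i * of_nat (rho n i))"
    by (simp add: algebra_simps sum_subtractf sum_distrib_left sum.distrib)
  also have "\<dots> = of_nat (n * m) * poly q 1 ^ m - poly (pderiv (q ^ m)) 1 - wsum (\<lambda>i. of_nat (rho n i)) (q ^ m)"
    using poly1_sum[OF dqm] pderiv1_sum[OF dqm] wsum_ext[OF dqm] by simp
  finally show ?thesis .
qed


abbreviation XX :: "complex poly" where "XX \<equiv> [:0,1:]"

lemma cong_smult: "[A = B] (mod (T::complex poly)) \<Longrightarrow> [smult c A = smult c B] (mod T)"
  by (simp add: cong_iff_dvd_diff dvd_smult flip: smult_diff_right)

lemma cong_poly1:
  assumes "[A = B] (mod (XX ^ n - 1))"
  shows "poly A 1 = poly B 1"
proof -
  obtain H where "A - B = (XX ^ n - 1) * H" using assms by (auto simp: cong_iff_dvd_diff elim!: dvdE)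
  then have "poly (A - B) 1 = 0" by simp
  then show ?thesis by simp
qed

lemma XJ: "XX * (\<Sum>j<n. XX ^ j) = (\<Sum>j<n. XX ^ j) + (XX ^ n - 1)"
proof -
  have "XX * (\<Sum>j<n. XX ^ j) - (\<Sum>j<n. XX ^ j) = (\<Sum>j<n. XX ^ Suc j - XX ^ j)"
    by (simp add: sum_distrib_left sum_subtractf)
  also have "\<dots> = XX ^ n - 1" by (subst sum_lessThan_telescope) simp
  finally show ?thesis by (simp add: algebra_simps)
qed

lemma XmJ: "[XX ^ m * (\<Sum>j<n. XX ^ j) = (\<Sum>j<n. XX ^ j)] (mod (XX ^ n - 1))"
proof (induction m)
  case 0 then show ?case by simp
next
  case (Suc m)
  let ?J = "\<Sum>j<n. XX ^ j"
  have "[XX * (XX ^ m * ?J) = XX * ?J] (mod (XX ^ n - 1))"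
    using Suc by (rule cong_scalar_left)
  moreover have "[XX * ?J = ?J] (mod (XX ^ n - 1))"
    unfolding cong_iff_dvd_diff XJ by simp
  ultimately show ?case by (simp add: mult.assoc cong_trans)
qed

lemma JJ: "[(\<Sum>j<n. XX ^ j) * (\<Sum>j<n. XX ^ j) = smult (of_nat n) (\<Sum>j<n. XX ^ j)] (mod (XX ^ n - 1))"
proof -
  let ?J = "\<Sum>j<n. XX ^ j"
  have "?J * ?J = (\<Sum>j<n. XX ^ j * ?J)" by (simp add: sum_distrib_right)
  moreover have "[(\<Sum>j<n. XX ^ j * ?J) = (\<Sum>j<n. ?J)] (mod (XX ^ n - 1))"
    by (rule cong_sum) (rule XmJ)
  moreover have "(\<Sum>j<n. ?J) = smult (of_nat n) ?J"
    by (simp add: of_nat_poly)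
  ultimately show ?thesis by simp
qed


lemma coeff_Xpow: "coeff (XX ^ j) i = (if i = j then 1 else 0)"
proof -
  have "XX ^ j = monom (1::complex) j" by (simp add: monom_altdef)
  then show ?thesis by (simp add: coeff_monom)
qed

lemma coeff_J: "coeff (\<Sum>j<n. XX ^ j) i = (if i < n then 1 else 0)"
  by (simp add: coeff_sum coeff_Xpow)

lemma gauss_c: "2 * (\<Sum>i<n. (of_nat (Suc i) :: complex)) = of_nat n * (of_nat n + 1)"
  by (induction n) (simp_all add: algebra_simps)

lemma coeff_p:
  fixes p :: "complex poly" and a :: complex
  assumes p: "p = smult a (Poly (of_nat (d - 1) # replicate d (-2)))"
  shows "coeff p i = (if i = 0 then a * of_nat (d - 1) else if i \<le> d then -2 * a else 0)"
proof (cases i)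
  case 0 then show ?thesis by (simp add: p)
next
  case (Suc j) then show ?thesis by (auto simp: p nth_default_def)
qed

lemma degree_p:
  fixes p :: "complex poly" and a :: complex
  assumes p: "p = smult a (Poly (of_nat (d - 1) # replicate d (-2)))" and d: "1 \<le> d" and a: "a \<noteq> 0"
  shows "degree p = d"
proof (rule antisym)
  show "degree p \<le> d" by (rule degree_le) (auto simp: coeff_p[OF p])
  show "d \<le> degree p" using d a by (intro le_degree) (simp add: coeff_p[OF p])
qed

lemma coeff_q:
  fixes p :: "complex poly" and a :: complex
  assumes p: "p = smult a (Poly (of_nat (d - 1) # replicate d (-2)))" and d: "1 \<le> d"
  shows "coeff (XX * p) i = a * ((if i = 1 then of_nat (d + 1) else 0) - (if 1 \<le> i \<and> i \<le> d + 1 then 2 else 0))"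
proof (cases i)
  case 0 then show ?thesis by simp
next
  case (Suc j)
  then show ?thesis using d by (cases j) (auto simp: coeff_p[OF p] of_nat_diff algebra_simps)
qed

context
  fixes d :: nat and a :: complex and q :: "complex poly"
  assumes cq: "\<And>i. coeff q i = a * ((if i = 1 then of_nat (d + 1) else 0) - (if 1 \<le> i \<and> i \<le> d + 1 then 2 else 0))"
begin

lemma degree_q: "degree q \<le> d + 1"
  by (rule degree_le) (simp add: cq)

lemma q_decomp: "q = smult (of_nat (d+1) * a) XX - smult (2*a) (\<Sum>j<d+1. XX ^ j) - smult (2*a) (XX ^ (d+1) - 1)"
proof (rule poly_eqI)
  fix i
  have x1: "coeff XX i = (if i = 1 then 1 else 0)" using coeff_Xpow[of 1 i] by simp
  show "coeff q i = coeff (smult (of_nat (d+1) * a) XX - smult (2*a) (\<Sum>j<d+1. XX ^ j) - smult (2*a) (XX ^ (d+1) - 1)) i"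
    unfolding coeff_diff coeff_smult cq coeff_J coeff_Xpow x1 coeff_1
    by (auto simp: algebra_simps)
qed

lemma poly_q1: "poly q 1 = - (of_nat (d+1) * a)"
proof -
  have "poly q 1 = (\<Sum>i\<le>d+1. coeff q i)" by (rule poly1_sum[OF degree_q])
  also have "\<dots> = coeff q 0 + (\<Sum>i<d+1. coeff q (Suc i))" by (rule sum.atMost_shift)
  also have "\<dots> = (\<Sum>i<d+1. a * ((if i = 0 then of_nat (d + 1) else 0)) - 2 * a)"
    by (simp add: cq algebra_simps)
  also have "\<dots> = - (of_nat (d+1) * a)"
    by (simp add: sum_subtractf sum_distrib_left[symmetric] algebra_simps)
  finally show ?thesis .
qed

lemma pderiv_q1: "poly (pderiv q) 1 = - (of_nat (d+1) * (of_nat (d+1) * a))"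
proof -
  have "poly (pderiv q) 1 = (\<Sum>i\<le>d+1. of_nat i * coeff q i)" by (rule pderiv1_sum[OF degree_q])
  also have "\<dots> = of_nat 0 * coeff q 0 + (\<Sum>i<d+1. of_nat (Suc i) * coeff q (Suc i))"
    by (rule sum.atMost_shift)
  also have "\<dots> = (\<Sum>i<d+1. a * ((if i = 0 then of_nat (d + 1) else 0)) - 2 * a * of_nat (Suc i))"
    unfolding of_nat_0 mult_zero_left add_0_left by (rule sum.cong) (auto simp: cq algebra_simps)
  also have "\<dots> = a * of_nat (d + 1) - a * (2 * (\<Sum>i<d+1. (of_nat (Suc i) :: complex)))"
  proof -
    have "(\<Sum>i<d+1. a * (if i = 0 then of_nat (d+1) else 0)) = a * of_nat (d+1)"
      by (simp add: sum_distrib_left[symmetric])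
    moreover have "(\<Sum>i<d+1. 2 * a * (of_nat (Suc i) :: complex)) = a * (2 * (\<Sum>i<d+1. (of_nat (Suc i) :: complex)))"
      by (simp add: sum_distrib_left algebra_simps)
    ultimately show ?thesis by (simp only: sum_subtractf)
  qed
  also have "\<dots> = - (of_nat (d+1) * (of_nat (d+1) * a))"
    unfolding gauss_c by (simp add: algebra_simps)
  finally show ?thesis .
qed

end

lemma XJc: "[XX * (\<Sum>j<n. XX ^ j) = (\<Sum>j<n. XX ^ j)] (mod (XX ^ n - 1))"
  using XmJ[of 1 n] by (simp only: power_one_right)

lemma pow_cong_exists:
  fixes q :: "complex poly" and a b :: complex and n :: nat
  defines "J \<equiv> \<Sum>j<n. XX ^ j"
  assumes qc: "[q = smult b XX - smult (2*a) J] (mod (XX ^ n - 1))"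
  shows "\<exists>e. [q ^ m = smult (b ^ m) (XX ^ m) + smult e J] (mod (XX ^ n - 1))"
proof (induction m)
  case 0
  show ?case by (rule exI[of _ 0]) (simp flip: one_pCons)
next
  case (Suc m)
  let ?T = "XX ^ n - 1"
  from Suc obtain e where e: "[q ^ m = smult (b ^ m) (XX ^ m) + smult e J] (mod ?T)" by blast
  have c1: "[q ^ Suc m = (smult b XX - smult (2*a) J) * (smult (b ^ m) (XX ^ m) + smult e J)] (mod ?T)"
    unfolding power_Suc by (rule cong_mult[OF qc e])
  have eq: "(smult b XX - smult (2*a) J) * (smult (b ^ m) (XX ^ m) + smult e J)
     = smult (b ^ Suc m) (XX ^ Suc m) + smult (b*e) (XX * J) - smult (2*a*b^m) (XX ^ m * J) - smult (2*a*e) (J * J)"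
    by (simp only: ring_distribs mult_smult_left mult_smult_right smult_smult power_Suc mult.commute mult.left_commute)
      (simp add: algebra_simps)
  have c2: "[smult (b ^ Suc m) (XX ^ Suc m) + smult (b*e) (XX * J) - smult (2*a*b^m) (XX ^ m * J) - smult (2*a*e) (J * J)
     = smult (b ^ Suc m) (XX ^ Suc m) + smult (b*e) J - smult (2*a*b^m) J - smult (2*a*e) (smult (of_nat n) J)] (mod ?T)"
    unfolding J_def
    by (intro cong_add cong_diff cong_smult cong_refl XmJ JJ XJc)
  have eq2: "smult (b ^ Suc m) (XX ^ Suc m) + smult (b*e) J - smult (2*a*b^m) J - smult (2*a*e) (smult (of_nat n) J)
     = smult (b ^ Suc m) (XX ^ Suc m) + smult (b*e - 2*a*b^m - 2*a*e*of_nat n) J"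
    by (simp add: smult_diff_left smult_add_left smult_smult algebra_simps)
  have "[q ^ Suc m = smult (b ^ Suc m) (XX ^ Suc m) + smult (b*e - 2*a*b^m - 2*a*e*of_nat n) J] (mod ?T)"
    using cong_trans[OF c1[unfolded eq] c2] unfolding eq2 .
  then show ?case by blast
qed


theorem proposition18:
  fixes d k N :: nat and a :: complex and p :: "complex poly"
  assumes "d \<ge> 2"
    and "k > 0" and "(of_nat (d + 1) * a) ^ k = 1"
    and "\<And>j. 0 < j \<Longrightarrow> j < k \<Longrightarrow> (of_nat (d + 1) * a) ^ j \<noteq> 1"
    and "p = smult a (Poly (of_nat (d - 1) # replicate d (-2)))"
    and "N = (if odd d then lcm k (d + 1) else lcm k (2 * (d + 1)))"
  shows "\<forall>m \<ge> 1. col_partial_sum p (m + N) = col_partial_sum p m"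
proof -
  note d2 = assms(1) and kpos = assms(2) and bk = assms(3) and pdef = assms(5) and Ndef = assms(6)
  define n where "n = d + 1"
  define b where "b = of_nat n * a"
  define q where "q = XX * p"
  define J where "J = (\<Sum>j<n. XX ^ j)"
  define R where "R = wsum (\<lambda>i. of_nat (rho n i))"
  have d1: "1 \<le> d" using d2 by simp
  have npos: "0 < n" by (simp add: n_def)
  have nnz: "(of_nat n :: complex) \<noteq> 0" using npos by simp
  have bk': "b ^ k = 1" using bk unfolding b_def n_def .
  have anz: "a \<noteq> 0"
  proof
    assume "a = 0"
    then have "b = 0" by (simp add: b_def)
    then have "b ^ k = 0" using kpos by simp
    then show False using bk' by simp
  qed
  have degp: "degree p = d" by (rule degree_p[OF pdef d1 anz])
  have cq: "\<And>i. coeff q i = a * ((if i = 1 then of_nat (d + 1) else 0) - (if 1 \<le> i \<and> i \<le> d + 1 then 2 else 0))"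
    unfolding q_def by (rule coeff_q[OF pdef d1])
  have dq: "degree q \<le> n" using degree_q[OF cq] unfolding n_def .
  have q1: "poly q 1 = - b" using poly_q1[OF cq] unfolding b_def n_def .
  have dq1: "poly (pderiv q) 1 = - (of_nat n * b)" using pderiv_q1[OF cq] unfolding b_def n_def .
  have kN: "k dvd N" using Ndef by simp
  have nN: "n dvd N" and evN: "even N"
  proof -
    have "n dvd N \<and> even N"
    proof (cases "odd d")
      case True
      then have N: "N = lcm k n" using Ndef by (simp add: n_def)
      have "even n" using True by (simp add: n_def)
      moreover have "n dvd N" unfolding N by simp
      ultimately show ?thesis using dvd_trans by blast
    next
      case False
      then have N: "N = lcm k (2 * n)" using Ndef by (simp add: n_def)
      have "2 * n dvd N" unfolding N by simp
      then show ?thesis using dvd_trans by (metis dvd_triv_left dvd_triv_right)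
    qed
    then show "n dvd N" "even N" by auto
  qed
  have bN: "b ^ N = 1"
  proof -
    obtain t where "N = k * t" using kN by blast
    then show ?thesis by (simp add: power_mult bk')
  qed
  have mbN: "(- b) ^ N = 1" using evN bN by (simp add: power_minus_even)
  have qc: "[q = smult b XX - smult (2*a) J] (mod (XX ^ n - 1))"
  proof -
    have qe: "q = smult b XX - smult (2*a) J - smult (2*a) (XX^n - 1)"
      using q_decomp[OF cq] unfolding b_def n_def J_def .
    have gen: "\<And>x y z::complex poly. x - y - z - (x - y) = - z" by (simp add: algebra_simps)
    have "q - (smult b XX - smult (2*a) J) = - smult (2*a) (XX^n - 1)"
      unfolding qe by (rule gen)
    then show ?thesis unfolding cong_iff_dvd_diff by (simp only: dvd_minus_iff dvd_smult dvd_refl)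
  qed
  obtain e where e: "[q ^ N = smult (b ^ N) (XX ^ N) + smult e J] (mod (XX ^ n - 1))"
    using pow_cong_exists[OF qc[unfolded J_def], of N] unfolding J_def by blast
  have "poly (q ^ N) 1 = poly (smult (b ^ N) (XX ^ N) + smult e J) 1"
    by (rule cong_poly1[OF e])
  moreover have "poly J 1 = of_nat n" by (simp add: J_def poly_sum)
  ultimately have "1 = 1 + e * of_nat n" using q1 mbN bN by simp
  then have e0: "e = 0" using nnz by simp
  have XN: "[XX ^ N = 1] (mod (XX ^ n - 1))"
  proof -
    obtain t where Nt: "N = n * t" using nN by blast
    have "[XX ^ n = 1] (mod (XX ^ n - 1))" unfolding cong_iff_dvd_diff by (rule dvd_refl)
    then have "[(XX ^ n) ^ t = 1 ^ t] (mod (XX ^ n - 1))" by (rule cong_pow)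
    then show ?thesis by (simp only: power_mult[symmetric] power_one Nt)
  qed
  have qN: "[q ^ N = 1] (mod (XX ^ n - 1))"
  proof -
    have s: "smult 1 (XX ^ N) + smult 0 J = XX ^ N" by (simp only: smult_1_left smult_0_left add_0_right)
    show ?thesis using cong_trans[OF e[unfolded e0 bN s] XN] .
  qed
  have per: "\<And>m. [q ^ (m + N) = q ^ m] (mod (XX ^ n - 1))"
  proof -
    fix m
    have "[q ^ m * q ^ N = q ^ m * 1] (mod (XX ^ n - 1))" by (rule cong_scalar_left[OF qN])
    then show "[q ^ (m + N) = q ^ m] (mod (XX ^ n - 1))" by (simp only: power_add mult_1_right)
  qed
  have Rper: "\<And>m. R (q ^ (m + N)) = R (q ^ m)"
    unfolding R_def by (rule wsum_cong[of "\<lambda>i. of_nat (rho n i)" n]) (simp only: rho_per, rule per)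
  have fq: "fps_X * fps_of_poly p = fps_of_poly q" by (simp add: q_def fps_of_poly_mult)
  have dn: "degree p + 1 = n" by (simp add: degp n_def)
  have form: "of_nat n * col_partial_sum p m = - R (q ^ m)" if m: "1 \<le> m" for m
  proof -
    have mf: "of_nat n * fps_nth (fps_of_poly q ^ m * inverse ((1 - fps_X) * (1 - fps_X ^ n))) ((m - 1) * n)
     = of_nat (n * m) * poly q 1 ^ m - poly (pderiv (q ^ m)) 1 - wsum (\<lambda>i. of_nat (rho n i)) (q ^ m)"
      by (rule main_formula[OF npos dq m])
    have A: "of_nat n * col_partial_sum p m = of_nat (n * m) * poly q 1 ^ m - poly (pderiv (q ^ m)) 1 - R (q ^ m)"
      unfolding col_partial_sum_def fq dn R_def by (rule mf)
    obtain m' where m': "m = Suc m'" using m by (cases m) auto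
    have B: "poly (pderiv (q ^ m)) 1 = of_nat (Suc m') * (- b) ^ m' * (- (of_nat n * b))"
      unfolding m' pderiv_power_Suc by (simp only: poly_mult poly_smult poly_power q1 dq1)
    have C: "of_nat (n * m) * poly q 1 ^ m = of_nat (Suc m') * (- b) ^ m' * (- (of_nat n * b))"
      unfolding q1 m' by (simp add: algebra_simps)
    show ?thesis unfolding A B C by simp
  qed
  show ?thesis
  proof (intro allI impI)
    fix m :: nat assume m: "1 \<le> m"
    have "of_nat n * col_partial_sum p (m + N) = of_nat n * col_partial_sum p m"
      using form[OF m] form[of "m + N"] m Rper[of m] by simp
    then show "col_partial_sum p (m + N) = col_partial_sum p m" using nnz by simp
  qed
qed

end
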